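(* Let $0<\beta<1$ and $p>0$. For $w\in W^{1,1}[-p,p]$ nonnegative with $w(-p)=w(p)=0$, define $$\Lambda[w,p]=\frac{\sqrt{1-\beta^2}}{p}\int_{-p}^{p}\Big[\sqrt{1+w'(x)^2}-\beta+\frac{\sqrt{1-\beta^2}}{p}\,x\,w'(x)\Big]dx.$$ Then $$\Lambda[w,p]\ \ge\ \arccos\beta-\beta\sqrt{1-\beta^2},$$ with equality if and only if $w(x)=\sqrt{R^2-x^2}-\beta R$ with $R=p/\sqrt{1-\beta^2}$.
   Context: $W^{1,1}[-p,p]$ denotes the Sobolev space of integrable functions on $[-p,p]$ with integrable weak derivative (absolutely continuous functions). *)

theory Defs
  imports "HOL-Analysis.Analysis"
begin

text \<open>W^{1,1}[a,b]: w is (a.e. equal to) an absolutely continuous function, i.e.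
  there is an integrable g (the weak derivative w') with
  w x = w a + \<integral>_a^x g for all x in [a,b].\<close>
definition W11_weak_deriv :: "real \<Rightarrow> real \<Rightarrow> (real \<Rightarrow> real) \<Rightarrow> (real \<Rightarrow> real) \<Rightarrow> bool" where
  "W11_weak_deriv a b w g \<longleftrightarrow>
     g absolutely_integrable_on {a..b} \<and>
     (\<forall>x\<in>{a..b}. w x = w a + integral {a..x} g)"

text \<open>The functional Lambda[w,p], expressed through the weak derivative g = w'.\<close>
definition Lambda :: "real \<Rightarrow> (real \<Rightarrow> real) \<Rightarrow> real \<Rightarrow> real" where
  "Lambda \<beta> g p = sqrt (1 - \<beta>\<^sup>2) / p *
     integral {-p..p} (\<lambda>x. sqrt (1 + (g x)\<^sup>2) - \<beta> + sqrt (1 - \<beta>\<^sup>2) / p * x * g x)"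

end

theory Submission
  imports Defs "HOL-Analysis.Analysis"
begin


lemma nonneg_int0_negligible:
  fixes f :: "real \<Rightarrow> real"
  assumes fi: "f absolutely_integrable_on S" and S: "S \<in> sets lebesgue"
    and nn: "\<And>x. x \<in> S \<Longrightarrow> f x \<ge> 0" and z: "integral S f = 0"
  shows "negligible {x\<in>S. f x \<noteq> 0}"
proof -
  have "(LINT x:S | lebesgue. f x) = 0"
    using set_lebesgue_integral_eq_integral(2)[OF fi] z by simp
  hence "integral\<^sup>L lebesgue (\<lambda>x. indicator S x *\<^sub>R f x) = 0"
    unfolding set_lebesgue_integral_def .
  moreover have "integrable lebesgue (\<lambda>x. indicator S x *\<^sub>R f x)"
    using fi unfolding set_integrable_def .
  ultimately have "AE x in lebesgue. indicator S x *\<^sub>R f x = 0"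
    using integral_nonneg_eq_0_iff_AE[of lebesgue "\<lambda>x. indicator S x *\<^sub>R f x"] nn
    by (auto simp: indicator_def)
  then obtain N where N: "negligible N" "{x. \<not> (indicator S x *\<^sub>R f x = 0)} \<subseteq> N"
    using eventually_ae_filter_negligible by metis
  have "{x\<in>S. f x \<noteq> 0} \<subseteq> N" using N(2) by (auto simp: indicator_def)
  thus ?thesis using N(1) negligible_subset by blast
qed



lemma lborel_zero_from_tails:
  fixes K :: "real \<Rightarrow> real"
  assumes Ki: "integrable lborel K"
    and z: "\<And>t. integral\<^sup>L lborel (\<lambda>x. indicator {t<..} x * K x) = 0"
  shows "AE x in lborel. K x = 0"
proof -
  have Km[measurable]: "K \<in> borel_measurable borel" using Ki by auto
  define M1 where "M1 = density lborel (\<lambda>x. ennreal (K x))"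
  define M2 where "M2 = density lborel (\<lambda>x. ennreal (- K x))"
  have e: "emeasure M1 {t<..} = ennreal (integral\<^sup>L lborel (\<lambda>x. indicator {t<..} x * max (K x) 0))"
     and e2: "emeasure M2 {t<..} = ennreal (integral\<^sup>L lborel (\<lambda>x. indicator {t<..} x * max (- K x) 0))"
    for t
  proof -
    have i1: "integrable lborel (\<lambda>x. indicator {t<..} x * max (K x) 0)"
      by (rule Bochner_Integration.integrable_bound[OF Ki]) (auto simp: indicator_def)
    have i2: "integrable lborel (\<lambda>x. indicator {t<..} x * max (- K x) 0)"
      by (rule Bochner_Integration.integrable_bound[OF Ki]) (auto simp: indicator_def)
    have "emeasure M1 {t<..} = (\<integral>\<^sup>+x. ennreal (K x) * indicator {t<..} x \<partial>lborel)"
      unfolding M1_def by (simp add: emeasure_density)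
    also have "\<dots> = (\<integral>\<^sup>+x. ennreal (indicator {t<..} x * max (K x) 0) \<partial>lborel)"
      by (intro nn_integral_cong) (auto simp: indicator_def max_def ennreal_neg)
    also have "\<dots> = ennreal (integral\<^sup>L lborel (\<lambda>x. indicator {t<..} x * max (K x) 0))"
      by (intro nn_integral_eq_integral i1) (auto simp: indicator_def)
    finally show "emeasure M1 {t<..} = ennreal (integral\<^sup>L lborel (\<lambda>x. indicator {t<..} x * max (K x) 0))" .
    have "emeasure M2 {t<..} = (\<integral>\<^sup>+x. ennreal (- K x) * indicator {t<..} x \<partial>lborel)"
      unfolding M2_def by (simp add: emeasure_density)
    also have "\<dots> = (\<integral>\<^sup>+x. ennreal (indicator {t<..} x * max (- K x) 0) \<partial>lborel)"
      by (intro nn_integral_cong) (auto simp: indicator_def max_def ennreal_neg)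
    also have "\<dots> = ennreal (integral\<^sup>L lborel (\<lambda>x. indicator {t<..} x * max (- K x) 0))"
      by (intro nn_integral_eq_integral i2) (auto simp: indicator_def)
    finally show "emeasure M2 {t<..} = ennreal (integral\<^sup>L lborel (\<lambda>x. indicator {t<..} x * max (- K x) 0))" .
  qed
  have eq: "emeasure M1 {t<..} = emeasure M2 {t<..}" for t
  proof -
    have i1: "integrable lborel (\<lambda>x. indicator {t<..} x * max (K x) 0)"
      by (rule Bochner_Integration.integrable_bound[OF Ki]) (auto simp: indicator_def)
    have i2: "integrable lborel (\<lambda>x. indicator {t<..} x * max (- K x) 0)"
      by (rule Bochner_Integration.integrable_bound[OF Ki]) (auto simp: indicator_def)
    have "integral\<^sup>L lborel (\<lambda>x. indicator {t<..} x * max (K x) 0) - integral\<^sup>L lborel (\<lambda>x. indicator {t<..} x * max (- K x) 0)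
       = integral\<^sup>L lborel (\<lambda>x. indicator {t<..} x * max (K x) 0 - indicator {t<..} x * max (- K x) 0)"
      using i1 i2 by simp
    also have "\<dots> = integral\<^sup>L lborel (\<lambda>x. indicator {t<..} x * K x)"
      by (intro Bochner_Integration.integral_cong) (auto simp: indicator_def max_def)
    finally show ?thesis using z[of t] e[of t] e2[of t] by simp
  qed
  have "M1 = M2"
  proof (rule measure_eqI_lessThan)
    show "sets M1 = sets borel" "sets M2 = sets borel" unfolding M1_def M2_def by auto
    show "emeasure M1 {x<..} < \<infinity>" for x using e[of x] by simp
  qed (rule eq)
  hence "AE x in lborel. ennreal (K x) = ennreal (- K x)"
    unfolding M1_def M2_def by (intro sigma_finite_measure.density_unique[OF sigma_finite_lborel]) auto
  thus ?thesis
  proof (rule AE_mp, intro AE_I2 impI)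
    fix x assume "ennreal (K x) = ennreal (- K x)"
    thus "K x = 0"
      by (cases "K x" "0::real" rule: linorder_cases) (auto simp: ennreal_neg)
  qed
qed



lemma zero_interval_integrals_negligible:
  fixes k :: "real \<Rightarrow> real"
  assumes ki: "k absolutely_integrable_on {a..b}" and z: "\<forall>x\<in>{a..b}. integral {a..x} k = 0"
  shows "negligible {x\<in>{a..b}. k x \<noteq> 0}"
proof -
  define K where "K x = indicator {a..b} x * k x" for x
  have Kl: "integrable lebesgue K"
    using ki unfolding set_integrable_def K_def by simp
  hence "K \<in> borel_measurable (completion lborel)" by auto
  then obtain K' where K'm: "K' \<in> borel_measurable lborel" and KK': "AE x in lborel. K x = K' x"
    using completion_ex_borel_measurable_real by blast
  have KK'c: "AE x in lebesgue. K x = K' x" using AE_completion[OF KK'] .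
  have "integrable lebesgue K'"
    by (rule integrable_cong_AE_imp[OF Kl _ KK'c]) (auto intro: measurable_completion K'm)
  hence K'i: "integrable lborel K'"
    using integrable_completion[of K' lborel] K'm by auto
  have T0: "integral ({t<..} \<inter> {a..b}) k = 0" for t
  proof (cases "a \<le> b")
    case False thus ?thesis by simp
  next
    case ab: True
    have kint: "k integrable_on {a..b}" using ki set_lebesgue_integral_eq_integral(1) by blast
    show ?thesis
    proof (cases "t < a")
      case True
      hence "{t<..} \<inter> {a..b} = {a..b}" by auto
      thus ?thesis using z ab by fastforce
    next
      case ta: False
      show ?thesis
      proof (cases "t < b")
        case False hence "{t<..} \<inter> {a..b} = {}" by auto
        thus ?thesis by simp
      next
        case tb: True
        have Teq: "{t<..} \<inter> {a..b} = {t<..b}" using ta by auto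
        have "integral {t<..b} k = integral {t..b} k"
          by (rule integral_spike_set) (auto intro: negligible_subset[of "{t}"])
        moreover have "integral {a..b} k = integral {a..t} k + integral {t..b} k"
          using Henstock_Kurzweil_Integration.integral_combine[of a t b k] ta tb kint by simp
        ultimately show ?thesis using z ta tb ab Teq by auto
      qed
    qed
  qed
  have tails: "integral\<^sup>L lborel (\<lambda>x. indicator {t<..} x * K' x) = 0" for t
  proof -
    have K'l: "K' \<in> borel_measurable lebesgue" using measurable_completion[OF K'm] by simp
    have m1: "(\<lambda>x. indicator {t<..} x * K' x) \<in> borel_measurable lebesgue"
      using K'l by (auto intro!: borel_measurable_times borel_measurable_indicator)
    have "set_integrable lebesgue ({t<..} \<inter> {a..b}) k"
      by (rule set_integrable_subset[OF ki]) auto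
    hence m2: "(\<lambda>x. indicator ({t<..} \<inter> {a..b}) x *\<^sub>R k x) \<in> borel_measurable lebesgue"
      unfolding set_integrable_def by auto
    have "integral\<^sup>L lborel (\<lambda>x. indicator {t<..} x * K' x)
        = integral\<^sup>L lebesgue (\<lambda>x. indicator {t<..} x * K' x)"
      using K'm by (subst integral_completion) auto
    also have "\<dots> = integral\<^sup>L lebesgue (\<lambda>x. indicator ({t<..} \<inter> {a..b}) x *\<^sub>R k x)"
      using KK'c m1 m2 by (intro integral_cong_AE) (auto simp: K_def indicator_def intro: measurable_completion K'm)
    also have "\<dots> = (LINT x:({t<..} \<inter> {a..b}) | lebesgue. k x)"
      unfolding set_lebesgue_integral_def ..
    also have "\<dots> = integral ({t<..} \<inter> {a..b}) k"
      by (rule set_lebesgue_integral_eq_integral(2), rule set_integrable_subset[OF ki]) auto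
    finally show ?thesis using T0 by simp
  qed
  have "AE x in lborel. K' x = 0" by (rule lborel_zero_from_tails[OF K'i tails])
  hence "AE x in lborel. K x = 0" using KK' by auto
  hence "AE x in lebesgue. K x = 0" by (rule AE_completion)
  then obtain N where N: "negligible N" "{x. \<not> K x = 0} \<subseteq> N"
    using eventually_ae_filter_negligible by metis
  have "{x\<in>{a..b}. k x \<noteq> 0} \<subseteq> N" using N(2) by (auto simp: K_def indicator_def)
  thus ?thesis using N(1) negligible_subset by blast
qed



lemma pw_key:
  fixes b t :: real assumes b: "\<bar>b\<bar> < 1"
  shows "1 + t\<^sup>2 - (sqrt (1 - b\<^sup>2) - b*t)\<^sup>2 = (b + sqrt (1 - b\<^sup>2) * t)\<^sup>2"
proof -
  have "(sqrt (1 - b\<^sup>2))\<^sup>2 = 1 - b\<^sup>2" using b by (simp add: abs_square_less_1 less_imp_le)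
  thus ?thesis by (simp add: power2_eq_square algebra_simps)
qed

lemma pw_ge:
  fixes b t :: real assumes b: "\<bar>b\<bar> < 1"
  shows "sqrt (1 - b\<^sup>2) \<le> sqrt (1 + t\<^sup>2) + b*t"
proof -
  have "(sqrt (1 - b\<^sup>2) - b*t)\<^sup>2 \<le> 1 + t\<^sup>2" using pw_key[OF b, of t]
    by (metis diff_ge_0_iff_ge zero_le_power2)
  hence "sqrt ((sqrt (1 - b\<^sup>2) - b*t)\<^sup>2) \<le> sqrt (1 + t\<^sup>2)" by (rule real_sqrt_le_mono)
  hence "\<bar>sqrt (1 - b\<^sup>2) - b*t\<bar> \<le> sqrt (1 + t\<^sup>2)" by simp
  thus ?thesis by linarith
qed

lemma pw_eq:
  fixes b t :: real assumes b: "\<bar>b\<bar> < 1" and e: "sqrt (1 + t\<^sup>2) + b*t = sqrt (1 - b\<^sup>2)"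
  shows "t = - b / sqrt (1 - b\<^sup>2)"
proof -
  have a: "sqrt (1 - b\<^sup>2) > 0" using b by (simp add: abs_square_less_1)
  have "sqrt (1 + t\<^sup>2) = sqrt (1 - b\<^sup>2) - b*t" using e by linarith
  hence "1 + t\<^sup>2 = (sqrt (1 - b\<^sup>2) - b*t)\<^sup>2" by (metis real_sqrt_pow2 zero_le_power2 add_nonneg_nonneg zero_le_one)
  hence "(b + sqrt (1 - b\<^sup>2) * t)\<^sup>2 = 0" using pw_key[OF b, of t] by simp
  hence "b + sqrt (1 - b\<^sup>2) * t = 0" by simp
  thus ?thesis using a by (simp add: field_simps)
qed

lemma pw_eq2:
  fixes b :: real assumes b: "\<bar>b\<bar> < 1"
  shows "sqrt (1 + (- b / sqrt (1 - b\<^sup>2))\<^sup>2) + b * (- b / sqrt (1 - b\<^sup>2)) = sqrt (1 - b\<^sup>2)"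
proof -
  define a where "a = sqrt (1 - b\<^sup>2)"
  have a: "a > 0" using b by (simp add: abs_square_less_1 a_def)
  have a2: "a\<^sup>2 = 1 - b\<^sup>2" using b by (simp add: abs_square_less_1 less_imp_le a_def)
  have "1 + (- b / a)\<^sup>2 = (1/a)\<^sup>2" using a a2 by (simp add: field_simps power2_eq_square)
  hence "sqrt (1 + (- b / a)\<^sup>2) = 1/a" using a by simp
  hence "sqrt (1 + (- b / a)\<^sup>2) + b * (- b / a) = (1 - b\<^sup>2)/a" using a by (simp add: field_simps power2_eq_square)
  also have "\<dots> = a" using a a2 by (simp add: field_simps power2_eq_square)
  finally show ?thesis unfolding a_def .
qed

lemma dW:
  fixes c x :: real assumes c: "c > 0" and x: "(c*x)\<^sup>2 < 1"
  shows "((\<lambda>x. sqrt (1 - (c*x)\<^sup>2) / c) has_real_derivative (- (c*x) / sqrt (1 - (c*x)\<^sup>2))) (at x)"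
proof -
  have pos: "1 - (c*x)\<^sup>2 > 0" using x by simp
  have "((\<lambda>x. 1 - (c*x)\<^sup>2) has_real_derivative (- (2*c*c*x))) (at x)"
    by (auto intro!: derivative_eq_intros simp: power2_eq_square)
  from DERIV_real_sqrt[OF pos] this
  have "((\<lambda>x. sqrt (1 - (c*x)\<^sup>2)) has_real_derivative (inverse (sqrt (1 - (c*x)\<^sup>2)) / 2 * (- (2*c*c*x)))) (at x)"
    by (rule DERIV_chain2)
  hence "((\<lambda>x. sqrt (1 - (c*x)\<^sup>2) / c) has_real_derivative (inverse (sqrt (1 - (c*x)\<^sup>2)) / 2 * (- (2*c*c*x))) / c) (at x)"
    by (rule DERIV_cdivide)
  moreover have "(inverse (sqrt (1 - (c*x)\<^sup>2)) / 2 * (- (2*c*c*x))) / c = - (c*x) / sqrt (1 - (c*x)\<^sup>2)"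
    using c by (simp add: field_simps)
  ultimately show ?thesis by simp
qed

lemma dF:
  fixes c x :: real assumes c: "c > 0" and x: "(c*x)\<^sup>2 < 1"
  shows "((\<lambda>x. (x * sqrt (1 - (c*x)\<^sup>2) + arcsin (c*x) / c) / 2) has_real_derivative sqrt (1 - (c*x)\<^sup>2)) (at x)"
proof -
  have pos: "1 - (c*x)\<^sup>2 > 0" using x by simp
  have cx: "-1 < c*x" "c*x < 1" using x by (auto simp: abs_square_less_1 abs_less_iff)
  have s2: "(sqrt (1 - (c*x)\<^sup>2))\<^sup>2 = 1 - (c*x)\<^sup>2" using pos by simp
  have d0: "((\<lambda>y. c * (sqrt (1 - (c*y)\<^sup>2) / c)) has_real_derivative c * (- (c*x) / sqrt (1 - (c*x)\<^sup>2))) (at x)"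
    by (rule DERIV_cmult[OF dW[OF c x]])
  have d1: "((\<lambda>x. sqrt (1 - (c*x)\<^sup>2)) has_real_derivative (- (c*c*x) / sqrt (1 - (c*x)\<^sup>2))) (at x)"
    using d0 c by (simp add: mult.assoc)
  have dc: "((\<lambda>y. c * y) has_real_derivative c) (at x)"
    by (auto intro!: derivative_eq_intros)
  have d2: "((\<lambda>x. arcsin (c*x)) has_real_derivative (inverse (sqrt (1 - (c*x)\<^sup>2)) * c)) (at x)"
    using DERIV_arcsin[OF cx] dc by (rule DERIV_chain2)
  have "((\<lambda>x. (x * sqrt (1 - (c*x)\<^sup>2) + arcsin (c*x) / c) / 2) has_real_derivative
         ((x * (- (c*c*x) / sqrt (1 - (c*x)\<^sup>2)) + 1 * sqrt (1 - (c*x)\<^sup>2) + (inverse (sqrt (1 - (c*x)\<^sup>2)) * c) / c) / 2)) (at x)"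
    by (intro DERIV_cdivide DERIV_add DERIV_mult'[OF DERIV_ident d1] d2)
  moreover have "((x * (- (c*c*x) / sqrt (1 - (c*x)\<^sup>2)) + 1 * sqrt (1 - (c*x)\<^sup>2) + (inverse (sqrt (1 - (c*x)\<^sup>2)) * c) / c) / 2) = sqrt (1 - (c*x)\<^sup>2)"
  proof -
    define a where "a = sqrt (1 - (c*x)\<^sup>2)"
    have a: "a > 0" "a\<^sup>2 = 1 - (c*x)\<^sup>2" using pos s2 by (auto simp: a_def)
    have "(x * (- (c*c*x) / a) + 1 * a + (inverse a * c) / c) / 2 = (a\<^sup>2 - (c*x)\<^sup>2 + 1) / (2*a)"
      using a c by (simp add: field_simps power2_eq_square)
    also have "\<dots> = a" using a by (simp add: field_simps power2_eq_square)
    finally show ?thesis unfolding a_def .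
  qed
  ultimately show ?thesis by (simp only:)
qed



lemma sqrt_bound: "sqrt (1 + t\<^sup>2) \<le> 1 + \<bar>t::real\<bar>"
proof -
  have "1 + t\<^sup>2 \<le> (1 + \<bar>t\<bar>)\<^sup>2" by (simp add: power2_eq_square algebra_simps)
  hence "sqrt (1 + t\<^sup>2) \<le> sqrt ((1 + \<bar>t\<bar>)\<^sup>2)" by (rule real_sqrt_le_mono)
  thus ?thesis by simp
qed

theorem mainTheorem3:
  fixes \<beta> p :: real and w g :: "real \<Rightarrow> real"
  assumes "0 < \<beta>" "\<beta> < 1" "0 < p"
    and "W11_weak_deriv (-p) p w g"
    and "\<forall>x\<in>{-p..p}. w x \<ge> 0"
    and "w (-p) = 0" "w p = 0"
  shows "Lambda \<beta> g p \<ge> arccos \<beta> - \<beta> * sqrt (1 - \<beta>\<^sup>2)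
    \<and> (Lambda \<beta> g p = arccos \<beta> - \<beta> * sqrt (1 - \<beta>\<^sup>2) \<longleftrightarrow>
         (let R = p / sqrt (1 - \<beta>\<^sup>2) in \<forall>x\<in>{-p..p}. w x = sqrt (R\<^sup>2 - x\<^sup>2) - \<beta> * R))"
proof -
  note bpos = assms(1) and b1 = assms(2) and ppos = assms(3)
  define s where "s = sqrt (1 - \<beta>\<^sup>2)"
  define c where "c = sqrt (1 - \<beta>\<^sup>2) / p"
  define a where "a x = sqrt (1 - (c*x)\<^sup>2)" for x
  define h where "h x = - (c*x) / a x" for x
  define f where "f x = sqrt (1 + (g x)\<^sup>2) - \<beta> + c * x * g x" for x
  define l where "l x = a x - \<beta>" for x
  have b2: "\<beta>\<^sup>2 < 1" using bpos b1 by (simp add: power_less_one_iff abs_square_less_1)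
  have s_pos: "s > 0" using b2 by (simp add: s_def)
  have s2: "s\<^sup>2 = 1 - \<beta>\<^sup>2" using b2 by (simp add: s_def)
  have "s\<^sup>2 < 1\<^sup>2" using s2 bpos by simp
  hence s1: "s < 1" by (rule power_less_imp_less_base) simp
  have sqs: "sqrt (1 - s\<^sup>2) = \<beta>" using s2 bpos by simp
  have c_pos: "c > 0" using s_pos ppos by (simp add: c_def s_def[symmetric])
  have cs: "c * p = s" using ppos by (simp add: c_def s_def)
  have cxa: "\<bar>c*x\<bar> < 1" if "x \<in> {-p..p}" for x
  proof -
    have "\<bar>c*x\<bar> = c * \<bar>x\<bar>" using c_pos by (simp add: abs_mult)
    also have "\<dots> \<le> c * p" using that c_pos by (intro mult_left_mono) auto
    finally show ?thesis using cs s1 by simp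
  qed
  have cx: "(c*x)\<^sup>2 < 1" if "x \<in> {-p..p}" for x
    using cxa[OF that] by (simp add: abs_square_less_1)
  have Lam: "Lambda \<beta> g p = c * integral {-p..p} f"
    unfolding Lambda_def c_def f_def by (rule refl)
  note W = assms(4)[unfolded W11_weak_deriv_def]
  have gi: "g absolutely_integrable_on {-p..p}" by (rule conjunct1[OF W])
  have wg: "\<forall>x\<in>{-p..p}. w x = w (-p) + integral {-p..x} g" by (rule conjunct2[OF W])
  have gm: "g \<in> borel_measurable (lebesgue_on {-p..p})"
    using gi by (simp add: absolutely_integrable_measurable)
  have idm: "(\<lambda>x::real. x) \<in> borel_measurable (lebesgue_on {-p..p})"
    by (fact id_borel_measurable_lebesgue_on[unfolded id_def])
  have phi: "(\<lambda>t::real. sqrt (1 + t\<^sup>2)) \<in> borel_measurable borel"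
    by (intro borel_measurable_continuous_onI continuous_intros)
  have sqm: "(\<lambda>x. sqrt (1 + (g x)\<^sup>2)) \<in> borel_measurable (lebesgue_on {-p..p})"
    using measurable_compose[OF gm phi] by simp
  have fm': "(\<lambda>x. sqrt (1 + (g x)\<^sup>2) - \<beta> + c * x * g x) \<in> borel_measurable (lebesgue_on {-p..p})"
    using sqm idm gm by measurable
  have fe: "f = (\<lambda>x. sqrt (1 + (g x)\<^sup>2) - \<beta> + c * x * g x)"
    by (rule ext) (simp only: f_def)
  have fm: "f \<in> borel_measurable (lebesgue_on {-p..p})"
    unfolding fe by (rule fm')
  have gabs: "(\<lambda>x. \<bar>g x\<bar>) integrable_on {-p..p}"
    using set_lebesgue_integral_eq_integral(1)[OF absolutely_integrable_norm[OF gi]] by (simp add: o_def)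
  have Bi: "(\<lambda>x. (1 + \<beta>) + (1 + c*p) * \<bar>g x\<bar>) integrable_on {-p..p}"
    using integrable_add[OF integrable_const_ivl[of "1+\<beta>" "-p" p] integrable_on_cmult_left[OF gabs, of "1+c*p"]] by simp
  have fi: "f absolutely_integrable_on {-p..p}"
  proof (rule measurable_bounded_by_integrable_imp_absolutely_integrable[OF fm _ Bi])
    show "{-p..p} \<in> sets lebesgue" by simp
    fix x assume x: "x \<in> {-p..p}"
    have Bb: "\<bar>c * x * g x\<bar> \<le> c * p * \<bar>g x\<bar>"
      using x c_pos by (auto simp: abs_mult intro!: mult_right_mono mult_left_mono)
    have B1: "c * x * g x \<le> c * p * \<bar>g x\<bar>" by (rule abs_le_D1[OF Bb])
    have B2: "- (c * x * g x) \<le> c * p * \<bar>g x\<bar>" by (rule abs_le_D2[OF Bb])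
    have Ab: "sqrt (1 + (g x)\<^sup>2) \<le> 1 + \<bar>g x\<bar>" by (rule sqrt_bound)
    have A0: "0 \<le> sqrt (1 + (g x)\<^sup>2)" by simp
    have e: "(1 + \<beta>) + (1 + c*p) * \<bar>g x\<bar> = 1 + \<beta> + \<bar>g x\<bar> + c * p * \<bar>g x\<bar>"
      by (simp add: algebra_simps)
    show "norm (f x) \<le> (1 + \<beta>) + (1 + c*p) * \<bar>g x\<bar>"
      unfolding real_norm_def f_def e
      by (rule abs_leI) (use B1 B2 Ab A0 bpos in linarith)+
  qed
  have lcont: "continuous_on {-p..p} l"
    unfolding l_def a_def by (intro continuous_intros)
  have li: "l absolutely_integrable_on {-p..p}"
    by (rule absolutely_integrable_continuous_real[OF lcont])
  define F where "F x = (x * sqrt (1 - (c*x)\<^sup>2) + arcsin (c*x) / c) / 2" for x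
  have "(a has_integral (F p - F (-p))) {-p..p}"
  proof (rule fundamental_theorem_of_calculus)
    show "-p \<le> p" using ppos by simp
    fix x assume "x \<in> {-p..p}"
    from dF[OF c_pos cx[OF this]] show "(F has_vector_derivative a x) (at x within {-p..p})"
      unfolding F_def a_def
      by (simp add: has_real_derivative_iff_has_vector_derivative has_vector_derivative_at_within)
  qed
  moreover have "F p = (p * \<beta> + arccos \<beta> / c) / 2"
  proof -
    have "arcsin s = arccos \<beta>"
      using arccos_arcsin_sqrt_pos[of \<beta>] bpos b1 s_def by simp
    thus ?thesis unfolding F_def using cs sqs by simp
  qed
  moreover have "F (-p) = - F p"
  proof -
    have "arcsin (-(c*p)) = - arcsin (c*p)" using cs s_pos s1 by (intro arcsin_minus) auto
    thus ?thesis unfolding F_def by (simp add: field_simps)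
  qed
  ultimately have aint: "integral {-p..p} a = p * \<beta> + arccos \<beta> / c"
    by (simp add: integral_unique field_simps)
  have lint: "integral {-p..p} l = arccos \<beta> / c - p * \<beta>"
  proof -
    have ai: "a integrable_on {-p..p}" unfolding a_def by (intro integrable_continuous_interval continuous_intros)
    have "integral {-p..p} l = integral {-p..p} a - integral {-p..p} (\<lambda>x. \<beta>)"
      unfolding l_def by (rule integral_diff[OF ai integrable_const_ivl])
    thus ?thesis using aint ppos by simp
  qed
  have bnd: "arccos \<beta> - \<beta> * sqrt (1 - \<beta>\<^sup>2) = c * integral {-p..p} l"
    using lint c_pos cs by (simp add: s_def field_simps)
  have Dnn: "f x - l x \<ge> 0" if "x \<in> {-p..p}" for x
    using pw_ge[OF cxa[OF that], of "g x"] unfolding f_def l_def a_def by (simp add: algebra_simps)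
  have fI: "f integrable_on {-p..p}" by (rule set_lebesgue_integral_eq_integral(1)[OF fi])
  have lI: "l integrable_on {-p..p}" by (rule set_lebesgue_integral_eq_integral(1)[OF li])
  have Dint: "integral {-p..p} (\<lambda>x. f x - l x) = integral {-p..p} f - integral {-p..p} l"
    by (rule integral_diff[OF fI lI])
  have ge: "integral {-p..p} l \<le> integral {-p..p} f"
    using integral_le[OF lI fI] Dnn by auto
  have R: "p / sqrt (1 - \<beta>\<^sup>2) = 1 / c" using ppos s_pos by (simp add: c_def s_def)
  have circ: "sqrt ((1/c)\<^sup>2 - x\<^sup>2) = a x / c" if "x \<in> {-p..p}" for x
  proof -
    have "(1/c)\<^sup>2 - x\<^sup>2 = (1 - (c*x)\<^sup>2) / c\<^sup>2" using c_pos by (simp add: field_simps)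
    thus ?thesis using c_pos by (simp add: a_def real_sqrt_divide)
  qed
  have hint: "integral {-p..x} h = a x / c - \<beta> / c" if x: "x \<in> {-p..p}" for x
  proof -
    have "(h has_integral (a x / c - a (-p) / c)) {-p..x}"
    proof (rule fundamental_theorem_of_calculus[where f = "\<lambda>x. a x / c"])
      show "-p \<le> x" using x by simp
      fix y assume "y \<in> {-p..x}"
      hence y: "y \<in> {-p..p}" using x by auto
      from dW[OF c_pos cx[OF y]] show "((\<lambda>x. a x / c) has_vector_derivative h y) (at y within {-p..x})"
        unfolding h_def a_def
        by (simp add: has_real_derivative_iff_has_vector_derivative has_vector_derivative_at_within)
    qed
    moreover have "a (-p) = \<beta>" unfolding a_def using cs sqs by (simp add: power2_eq_square)
    ultimately show ?thesis by (simp add: integral_unique)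
  qed
  have cxne: "\<forall>x\<in>{-p..p}. sqrt (1 - (c*x)\<^sup>2) \<noteq> 0"
  proof
    fix x assume xx: "x \<in> {-p..p}"
    show "sqrt (1 - (c*x)\<^sup>2) \<noteq> 0" using cx[OF xx] by simp
  qed
  have hcont: "continuous_on {-p..p} h"
    unfolding h_def a_def
    by (rule continuous_on_divide[OF _ _ cxne]) (intro continuous_intros)+
  have hi: "h absolutely_integrable_on {-p..p}"
    by (rule absolutely_integrable_continuous_real[OF hcont])
  have eq_iff: "integral {-p..p} f = integral {-p..p} l \<longleftrightarrow> (\<forall>x\<in>{-p..p}. w x = a x / c - \<beta> / c)"
  proof
    assume E: "integral {-p..p} f = integral {-p..p} l"
    have Di: "(\<lambda>x. f x - l x) absolutely_integrable_on {-p..p}"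
      using fi li by (rule set_integral_diff)
    have "negligible {x\<in>{-p..p}. f x - l x \<noteq> 0}"
      by (rule nonneg_int0_negligible[OF Di]) (use Dnn Dint E in auto)
    moreover have "{x\<in>{-p..p}. g x \<noteq> h x} \<subseteq> {x\<in>{-p..p}. f x - l x \<noteq> 0}"
    proof safe
      fix x assume x: "x \<in> {-p..p}" "g x \<noteq> h x" "f x - l x = 0"
      hence "sqrt (1 + (g x)\<^sup>2) + (c*x) * g x = sqrt (1 - (c*x)\<^sup>2)"
        unfolding f_def l_def a_def by (simp add: algebra_simps)
      from pw_eq[OF cxa[OF x(1)] this] x(2) show False unfolding h_def a_def by simp
    qed
    ultimately have N: "negligible {x\<in>{-p..p}. g x \<noteq> h x}" by (rule negligible_subset)
    show "\<forall>x\<in>{-p..p}. w x = a x / c - \<beta> / c"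
    proof
      fix x assume x: "x \<in> {-p..p}"
      have "integral {-p..x} g = integral {-p..x} h"
        by (rule integral_spike[OF N]) (use x in auto)
      thus "w x = a x / c - \<beta> / c" using wg x hint[OF x] assms(6) by simp
    qed
  next
    assume W: "\<forall>x\<in>{-p..p}. w x = a x / c - \<beta> / c"
    have gI: "g integrable_on {-p..p}" by (rule set_lebesgue_integral_eq_integral(1)[OF gi])
    have hI: "h integrable_on {-p..p}" by (rule set_lebesgue_integral_eq_integral(1)[OF hi])
    have k0: "\<forall>x\<in>{-p..p}. integral {-p..x} (\<lambda>x. g x - h x) = 0"
    proof
      fix x assume x: "x \<in> {-p..p}"
      have "integral {-p..x} (\<lambda>x. g x - h x) = integral {-p..x} g - integral {-p..x} h"
        by (rule integral_diff) (use x gI hI in \<open>auto intro: integrable_on_subinterval\<close>)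
      also have "\<dots> = 0"
        using wg W x hint[OF x] assms(6) ppos by auto
      finally show "integral {-p..x} (\<lambda>x. g x - h x) = 0" .
    qed
    have "negligible {x\<in>{-p..p}. g x - h x \<noteq> 0}"
      by (rule zero_interval_integrals_negligible[OF set_integral_diff(1)[OF gi hi] k0])
    hence N: "negligible {x\<in>{-p..p}. g x \<noteq> h x}" by simp
    have "integral {-p..p} (\<lambda>x. f x - l x) = integral {-p..p} (\<lambda>x. 0)"
    proof (rule integral_spike[OF N])
      fix x assume x: "x \<in> {-p..p} - {x\<in>{-p..p}. g x \<noteq> h x}"
      have x1: "x \<in> {-p..p}" using x by blast
      have gx: "g x = h x" using x by blast
      have e: "f x - l x = sqrt (1 + (g x)\<^sup>2) + (c*x) * g x - sqrt (1 - (c*x)\<^sup>2)"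
        unfolding f_def l_def a_def by simp
      have "sqrt (1 + (h x)\<^sup>2) + (c*x) * h x = sqrt (1 - (c*x)\<^sup>2)"
        unfolding h_def a_def by (rule pw_eq2[OF cxa[OF x1]])
      thus "0 = f x - l x" using e gx by simp
    qed
    thus "integral {-p..p} f = integral {-p..p} l" using Dint by simp
  qed
  have L1: "Lambda \<beta> g p \<ge> arccos \<beta> - \<beta> * sqrt (1 - \<beta>\<^sup>2)"
    unfolding Lam bnd using ge c_pos by (simp add: mult_left_mono)
  have L2: "Lambda \<beta> g p = arccos \<beta> - \<beta> * sqrt (1 - \<beta>\<^sup>2) \<longleftrightarrow> integral {-p..p} f = integral {-p..p} l"
    unfolding Lam bnd using c_pos by simp
  have L3: "(let R = p / sqrt (1 - \<beta>\<^sup>2) in \<forall>x\<in>{-p..p}. w x = sqrt (R\<^sup>2 - x\<^sup>2) - \<beta> * R)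
      \<longleftrightarrow> (\<forall>x\<in>{-p..p}. w x = a x / c - \<beta> / c)"
    unfolding R Let_def using circ by auto
  show ?thesis using L1 L2 L3 eq_iff by simp
qed


end
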